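(* Let $N$ be a tree rooted at $g$ with positive edge capacities and leaf set $L$, and let $G_R$ be a request graph on $V\cup\{g\}$, $|V|=k$, with bandwidths $f_e\ge0$. Let $T$ be the binary tree obtained from $N$ by Create-Binary-Tree, and run the dynamic program described in the context (Algorithm 2) on $T$ and $G_R$. Then the value $\mathrm{cong}[g,V]$ it returns equals the minimum, over all embeddings $\pi:V\to L$, of the congestion of $\pi$ in $N$.
   Context: Embedding problem: an embedding is an injective map $\pi:V\to L$ with $\pi(g)=g$; request edges are $(v_i,g)$ (type I, set $R^{I}$) or $(v_i,v_j)$ (type II, set $R^{II}$); the congestion of an edge $e$ of the host tree is $\frac1{c_e}\sum f_{(u,v)}$ over request edges $(u,v)$ whose host path between $\pi(u)$ and $\pi(v)$ contains $e$, and the congestion of $\pi$ is the maximum over host edges. Create-Binary-Tree$(N,g)$: for every node $v$ of $N$ of degree $>3$ with children $u_1,\dots,u_d$ via edges $e_1,\dots,e_d$, replace these edges by a binary tree rooted at $v$ with leaves $u_1,\dots,u_d$; the edge into $u_i$ gets capacity $c_{e_i}$, all other new edges capacity $\infty$. Algorithm 2: for a node $u$ of $T$ let $e_u$ be the edge from its parent to $u$, $u_l,u_r$ its left and right children, and $e_l,e_r$ the edges to them; $L^j$ is the set of nodes at distance $j$ from $g$ and $H$ the height of $T$. For each $S\subseteq V$ set $\mathrm{Flow}[S]=\sum_{(v,g)\in R^{I},v\in S}f_{(v,g)}+\sum_{(u,v)\in R^{II},u\in S,v\notin S}f_{(u,v)}$. For each leaf $u$ and $S\subseteq V$ set $\mathrm{cong}[u,S]=0$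 if $|S|\le1$ and $\infty$ otherwise. For $j=H,H-1,\dots,0$ and each non-leaf $u\in L^j$ and each $S\subseteq V$, set $\mathrm{cong}[u,S]=\min_{S_l\subseteq S}\max\{\mathrm{cong}[u_l,S_l],\mathrm{cong}[u_r,S\setminus S_l],\mathrm{Flow}[S_l]/c_{e_l},\mathrm{Flow}[S\setminus S_l]/c_{e_r}\}$ (recording a minimizing partition). Return $\mathrm{cong}[g,V]$. *)

theory Defs
  imports Main "HOL-Library.Multiset" "HOL-Library.Extended_Real"
begin

text \<open>A rooted host tree: a node label together with the list of its children,
  each child given with the (real) capacity of the edge from the node to that child.
  Node labels are assumed distinct (see host_tree_ok).\<close>
datatype 'a ntree = Nd 'a "('a ntree \<times> real) list"

fun root :: "'a ntree \<Rightarrow> 'a" where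
  "root (Nd v cs) = v"

fun children :: "'a ntree \<Rightarrow> ('a ntree \<times> real) list" where
  "children (Nd v cs) = cs"

fun labels :: "'a ntree \<Rightarrow> 'a list" where
  "labels (Nd v cs) = v # concat (map (\<lambda>p. labels (fst p)) cs)"

text \<open>All edges of the tree; an edge is represented by the subtree it leads into
  together with its capacity.\<close>
fun edges :: "'a ntree \<Rightarrow> ('a ntree \<times> real) list" where
  "edges (Nd v cs) = cs @ concat (map (\<lambda>p. edges (fst p)) cs)"

fun leaves :: "'a ntree \<Rightarrow> 'a set" where
  "leaves (Nd v cs) = (if cs = [] then {v} else (\<Union>p\<in>set cs. leaves (fst p)))"

definition host_tree_ok :: "'a ntree \<Rightarrow> bool" where
  "host_tree_ok N \<longleftrightarrow> distinct (labels N) \<and> (\<forall>e\<in>set (edges N). snd e > 0)"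

text \<open>The edge from the parent of the subtree c into c lies on the (unique) host path
  between nodes x and y iff exactly one of x, y lies in the subtree rooted at c.\<close>
definition on_path :: "'a \<Rightarrow> 'a \<Rightarrow> 'a ntree \<Rightarrow> bool" where
  "on_path x y c \<longleftrightarrow> ((x \<in> set (labels c)) \<noteq> (y \<in> set (labels c)))"

text \<open>Request edges of type I are (v,g) for v in RI, with bandwidth fI v;
  request edges of type II are the pairs (u,v) in RII, with bandwidth fII (u,v).\<close>

definition is_embedding :: "'a ntree \<Rightarrow> 'a \<Rightarrow> 'a set \<Rightarrow> ('a \<Rightarrow> 'a) \<Rightarrow> bool" where
  "is_embedding N g V \<pi> \<longleftrightarrow> \<pi> g = g \<and> inj_on \<pi> (insert g V) \<and> \<pi> ` V \<subseteq> leaves N"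

definition edge_load ::
  "'a set \<Rightarrow> ('a \<times> 'a) set \<Rightarrow> ('a \<Rightarrow> real) \<Rightarrow> ('a \<times> 'a \<Rightarrow> real) \<Rightarrow> 'a \<Rightarrow> ('a \<Rightarrow> 'a)
     \<Rightarrow> 'a ntree \<Rightarrow> real" where
  "edge_load RI RII fI fII g \<pi> c =
     (\<Sum>v\<in>RI. if on_path (\<pi> v) (\<pi> g) c then fI v else 0)
   + (\<Sum>e\<in>RII. if on_path (\<pi> (fst e)) (\<pi> (snd e)) c then fII e else 0)"

definition congestion ::
  "'a ntree \<Rightarrow> 'a set \<Rightarrow> ('a \<times> 'a) set \<Rightarrow> ('a \<Rightarrow> real) \<Rightarrow> ('a \<times> 'a \<Rightarrow> real) \<Rightarrow> 'a
     \<Rightarrow> ('a \<Rightarrow> 'a) \<Rightarrow> real" where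
  "congestion N RI RII fI fII g \<pi> =
     Max ((\<lambda>e. edge_load RI RII fI fII g \<pi> (fst e) / snd e) ` set (edges N))"

text \<open>Binary trees with edge capacities in ereal (new edges get capacity \<infinity>).
  Leaves keep their label; a node has one or two children.\<close>
datatype 'a btree = BLeaf 'a | BUn "'a btree" ereal | BBin "'a btree" ereal "'a btree" ereal

text \<open>combs M x: x = (t, c) is a binary tree t hanging below an edge of capacity c
  whose leaves are exactly the items of M (each item a subtree with the capacity
  of the edge into it); all newly created edges have capacity \<infinity>.\<close>
inductive combs :: "('a btree \<times> ereal) multiset \<Rightarrow> ('a btree \<times> ereal) \<Rightarrow> bool" where
  single: "combs {#x#} x"
| bin: "combs A (ta, ca) \<Longrightarrow> combs B (tb, cb) \<Longrightarrow> combs (A + B) (BBin ta ca tb cb, \<infinity>)"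
| un: "combs A (t, c) \<Longrightarrow> combs A (BUn t c, \<infinity>)"

text \<open>cbt N T: T is a possible output of Create-Binary-Tree(N, g): nodes with at most
  two children are kept, a node with d > 2 children is replaced by a binary tree
  rooted at it whose leaves are its (recursively transformed) children.\<close>
inductive cbt :: "'a ntree \<Rightarrow> 'a btree \<Rightarrow> bool" where
  leaf: "cbt (Nd v []) (BLeaf v)"
| one: "cbt c t \<Longrightarrow> cbt (Nd v [(c, x)]) (BUn t (ereal x))"
| two: "cbt c1 t1 \<Longrightarrow> cbt c2 t2 \<Longrightarrow>
          cbt (Nd v [(c1, x1), (c2, x2)]) (BBin t1 (ereal x1) t2 (ereal x2))"
| many: "length cs > 2 \<Longrightarrow> length ts = length cs \<Longrightarrow>
          (\<forall>i<length cs. cbt (fst (cs ! i)) (fst (ts ! i)) \<and> snd (ts ! i) = ereal (snd (cs ! i))) \<Longrightarrow>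
          combs (mset ts) (T, \<infinity>) \<Longrightarrow> cbt (Nd v cs) T"

text \<open>Flow[S]: total bandwidth of request edges with exactly one endpoint in S
  (for type I edges (v,g): v in S, as g is never in S).\<close>
definition Flow :: "'a set \<Rightarrow> ('a \<times> 'a) set \<Rightarrow> ('a \<Rightarrow> real) \<Rightarrow> ('a \<times> 'a \<Rightarrow> real) \<Rightarrow> 'a set \<Rightarrow> real" where
  "Flow RI RII fI fII S =
     (\<Sum>v\<in>RI. if v \<in> S then fI v else 0)
   + (\<Sum>e\<in>RII. if (fst e \<in> S) \<noteq> (snd e \<in> S) then fII e else 0)"

text \<open>The table cong[u,S], computed bottom-up (here: by structural recursion).
  For a node with a single child the missing child is treated as an empty subtree.\<close>
fun dp_cong :: "('a set \<Rightarrow> real) \<Rightarrow> 'a btree \<Rightarrow> 'a set \<Rightarrow> ereal" where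
  "dp_cong Fl (BLeaf u) S = (if card S \<le> 1 then 0 else \<infinity>)"
| "dp_cong Fl (BUn t c) S = max (dp_cong Fl t S) (ereal (Fl S) / c)"
| "dp_cong Fl (BBin l cl r cr) S =
     (INF Sl\<in>Pow S. max (max (dp_cong Fl l Sl) (dp_cong Fl r (S - Sl)))
                        (max (ereal (Fl Sl) / cl) (ereal (Fl (S - Sl)) / cr)))"

end

theory Submission
  imports Defs
begin


fun conv :: "('s set \<Rightarrow> ereal) list \<Rightarrow> 's set \<Rightarrow> ereal" where
  "conv [] S = (if S = {} then 0 else \<infinity>)"
| "conv (h#hs) S = (INF S1\<in>Pow S. max (h S1) (conv hs (S - S1)))"

lemma max_INF: "max (x::ereal) (INF i\<in>I. f i) = (INF i\<in>I. max x (f i))"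
  using sup_INF[of x f I] by (simp add: sup_max)

lemma INF2_swap:
  fixes f g :: "'x \<Rightarrow> 'y \<Rightarrow> ereal"
  assumes "\<And>x y. (x\<in>A \<and> y\<in>B x) = (y\<in>C \<and> x\<in>D y)"
    and "\<And>x y. x\<in>A \<Longrightarrow> y\<in>B x \<Longrightarrow> f x y = g x y"
  shows "(INF x\<in>A. INF y\<in>B x. f x y) = (INF y\<in>C. INF x\<in>D y. g x y)"
proof (rule antisym)
  show "(INF x\<in>A. INF y\<in>B x. f x y) \<le> (INF y\<in>C. INF x\<in>D y. g x y)"
  proof (intro INF_greatest)
    fix y x assume "y \<in> C" "x \<in> D y"
    then have "x \<in> A" "y \<in> B x" using assms(1) by blast+
    then show "(INF x\<in>A. INF y\<in>B x. f x y) \<le> g x y"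
      using assms(2) by (metis INF_lower2 order_refl)
  qed
  show "(INF y\<in>C. INF x\<in>D y. g x y) \<le> (INF x\<in>A. INF y\<in>B x. f x y)"
  proof (intro INF_greatest)
    fix y x assume "x \<in> A" "y \<in> B x"
    then have "y \<in> C" "x \<in> D y" using assms(1) by blast+
    then show "(INF y\<in>C. INF x\<in>D y. g x y) \<le> f x y"
      using assms(2) \<open>x \<in> A\<close> \<open>y \<in> B x\<close> by (metis INF_lower2 order_refl)
  qed
qed

lemma conv_nonneg: "0 \<le> conv hs S"
proof (induction hs arbitrary: S)
  case Nil then show ?case by simp
next
  case (Cons h hs) then show ?case
    by (simp add: le_max_iff_disj le_INF_iff)
qed

lemma conv_single: assumes "\<And>T. 0 \<le> h T" shows "conv [h] S = h S"
proof (rule antisym)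
  show "conv [h] S \<le> h S"
  proof -
    have "conv [h] S \<le> max (h S) (conv [] (S - S))"
      unfolding conv.simps(2) by (rule INF_lower) simp
    then show ?thesis using assms[of S] by (simp add: max_def)
  qed
  show "h S \<le> conv [h] S"
  proof (unfold conv.simps(2), intro INF_greatest)
    fix S1 assume "S1 \<in> Pow S"
    then show "h S \<le> max (h S1) (conv [] (S - S1))"
    proof (cases "S1 = S")
      case False
      then have "S - S1 \<noteq> {}" using \<open>S1 \<in> Pow S\<close> by blast
      then show ?thesis by simp
    qed (simp add: le_max_iff_disj)
  qed
qed

lemma conv_swap: "conv (a # b # r) S = conv (b # a # r) S"
proof -
  have "conv (a # b # r) S = (INF S1\<in>Pow S. INF S2\<in>Pow (S - S1). max (a S1) (max (b S2) (conv r (S - S1 - S2))))"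
    by (simp add: max_INF)
  also have "\<dots> = (INF S2\<in>Pow S. INF S1\<in>Pow (S - S2). max (b S2) (max (a S1) (conv r (S - S2 - S1))))"
  proof (rule INF2_swap)
    have d: "\<And>A B C::'a set. A - B - C = A - C - B" by blast
    show "\<And>x y. x \<in> Pow S \<Longrightarrow> y \<in> Pow (S - x) \<Longrightarrow>
      max (a x) (max (b y) (conv r (S - x - y))) = max (b y) (max (a x) (conv r (S - y - x)))"
      by (simp add: max.left_commute d[of S])
  qed auto
  also have "\<dots> = conv (b # a # r) S"
    by (simp add: max_INF)
  finally show ?thesis .
qed

lemma conv_move: "conv (g1 @ f # g2) = conv (f # g1 @ g2)"
proof (induction g1)
  case Nil then show ?case by simp
next
  case (Cons a g1)
  show ?case
  proof
    fix S
    have "conv ((a # g1) @ f # g2) S = conv (a # f # g1 @ g2) S"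
      using Cons by simp
    also have "\<dots> = conv (f # (a # g1) @ g2) S" by (simp only: conv_swap append_Cons)
    finally show "conv ((a # g1) @ f # g2) S = conv (f # (a # g1) @ g2) S" .
  qed
qed

lemma conv_perm: "mset fs = mset gs \<Longrightarrow> conv fs = conv gs"
proof (induction fs arbitrary: gs)
  case Nil then show ?case by simp
next
  case (Cons f fs)
  then have "f \<in> set gs" by (metis list.set_intros(1) set_mset_mset)
  then obtain g1 g2 where gs: "gs = g1 @ f # g2" by (meson split_list)
  then have "mset fs = mset (g1 @ g2)" using Cons.prems by simp
  then have "conv fs = conv (g1 @ g2)" using Cons.IH by blast
  then have "conv (f # fs) = conv (f # g1 @ g2)" by (simp add: fun_eq_iff)
  then show ?case using gs conv_move by metis
qed

lemma conv_append: "conv (fs @ gs) S = (INF S1\<in>Pow S. max (conv fs S1) (conv gs (S - S1)))"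
proof (induction fs arbitrary: S)
  case Nil
  show ?case
  proof (rule antisym)
    show "conv ([] @ gs) S \<le> (INF S1\<in>Pow S. max (conv [] S1) (conv gs (S - S1)))"
    proof (intro INF_greatest)
      fix S1 assume "S1 \<in> Pow S"
      then show "conv ([] @ gs) S \<le> max (conv [] S1) (conv gs (S - S1))"
        by (cases "S1 = {}") auto
    qed
    show "(INF S1\<in>Pow S. max (conv [] S1) (conv gs (S - S1))) \<le> conv ([] @ gs) S"
      by (rule INF_lower2[of "{}"]) (auto simp: conv_nonneg max_def)
  qed
next
  case (Cons f fs)
  have L: "conv ((f # fs) @ gs) S = (INF S1\<in>Pow S. INF S2\<in>Pow (S - S1). max (f S1) (max (conv fs S2) (conv gs (S - S1 - S2))))"
    by (simp add: Cons.IH max_INF)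
  have R: "(INF T\<in>Pow S. max (conv (f # fs) T) (conv gs (S - T))) = (INF T\<in>Pow S. INF S1\<in>Pow T. max (max (f S1) (conv fs (T - S1))) (conv gs (S - T)))"
    by (simp add: max_INF max.commute[of _ "conv gs _"])
  show ?case unfolding L R
  proof (rule antisym)
    show "(INF S1\<in>Pow S. INF S2\<in>Pow (S - S1). max (f S1) (max (conv fs S2) (conv gs (S - S1 - S2))))
      \<le> (INF T\<in>Pow S. INF S1\<in>Pow T. max (max (f S1) (conv fs (T - S1))) (conv gs (S - T)))"
    proof (intro INF_greatest)
      fix T S1 assume "T \<in> Pow S" "S1 \<in> Pow T"
      then have e: "S - S1 - (T - S1) = S - T" by auto
      show "(INF S1\<in>Pow S. INF S2\<in>Pow (S - S1). max (f S1) (max (conv fs S2) (conv gs (S - S1 - S2))))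
         \<le> max (max (f S1) (conv fs (T - S1))) (conv gs (S - T))"
        apply (rule INF_lower2[of S1])
        using \<open>T \<in> Pow S\<close> \<open>S1 \<in> Pow T\<close> apply blast
        apply (rule INF_lower2[of "T - S1"])
        using \<open>T \<in> Pow S\<close> apply blast
        by (simp add: e max.assoc)
    qed
    show "(INF T\<in>Pow S. INF S1\<in>Pow T. max (max (f S1) (conv fs (T - S1))) (conv gs (S - T)))
      \<le> (INF S1\<in>Pow S. INF S2\<in>Pow (S - S1). max (f S1) (max (conv fs S2) (conv gs (S - S1 - S2))))"
    proof (intro INF_greatest)
      fix S1 S2 assume "S1 \<in> Pow S" "S2 \<in> Pow (S - S1)"
      then have e: "S1 \<union> S2 - S1 = S2" "S - (S1 \<union> S2) = S - S1 - S2" by auto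
      show "(INF T\<in>Pow S. INF S1\<in>Pow T. max (max (f S1) (conv fs (T - S1))) (conv gs (S - T)))
         \<le> max (f S1) (max (conv fs S2) (conv gs (S - S1 - S2)))"
        apply (rule INF_lower2[of "S1 \<union> S2"])
        using \<open>S1 \<in> Pow S\<close> \<open>S2 \<in> Pow (S - S1)\<close> apply blast
        apply (rule INF_lower2[of S1])
         apply blast
        by (simp add: e max.assoc)
    qed
  qed
qed

lemma conv_cong:
  "list_all2 (\<lambda>f g. \<forall>T. finite T \<longrightarrow> f T = g T) fs gs \<Longrightarrow> finite S \<Longrightarrow> conv fs S = conv gs S"
proof (induction fs arbitrary: gs S)
  case Nil then show ?case by simp
next
  case (Cons f fs)
  then obtain g gs' where gs: "gs = g # gs'" and fg: "\<forall>T. finite T \<longrightarrow> f T = g T"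
    and r: "list_all2 (\<lambda>f g. \<forall>T. finite T \<longrightarrow> f T = g T) fs gs'"
    by (cases gs) auto
  show ?case unfolding gs conv.simps
  proof (rule INF_cong[OF refl])
    fix S1 assume "S1 \<in> Pow S"
    then have "finite S1" "finite (S - S1)" using Cons.prems(2) finite_subset by auto
    then show "max (f S1) (conv fs (S - S1)) = max (g S1) (conv gs' (S - S1))"
      using fg Cons.IH[OF r] by simp
  qed
qed



definition cost :: "('v set \<Rightarrow> real) \<Rightarrow> ('a ntree \<times> real) list \<Rightarrow> 'v set \<Rightarrow> ('v \<Rightarrow> 'a) \<Rightarrow> ereal" where
  "cost F es S \<pi> = Sup (insert 0 ((\<lambda>e. ereal (F {s\<in>S. \<pi> s \<in> set (labels (fst e))}) / ereal (snd e)) ` set es))"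

definition Opt :: "('v set \<Rightarrow> real) \<Rightarrow> 'a ntree \<Rightarrow> 'v set \<Rightarrow> ereal" where
  "Opt F c S = (INF \<pi>\<in>{\<pi>. inj_on \<pi> S \<and> \<pi> ` S \<subseteq> leaves c}. cost F (edges c) S \<pi>)"

definition fe :: "('a ntree \<times> real) list \<Rightarrow> ('a ntree \<times> real) list" where
  "fe cs = cs @ concat (map (\<lambda>p. edges (fst p)) cs)"
definition lvF :: "('a ntree \<times> real) list \<Rightarrow> 'a set" where
  "lvF cs = (\<Union>p\<in>set cs. leaves (fst p))"
definition lbF :: "('a ntree \<times> real) list \<Rightarrow> 'a list" where
  "lbF cs = concat (map (\<lambda>p. labels (fst p)) cs)"
definition HF :: "('v set \<Rightarrow> real) \<Rightarrow> ('a ntree \<times> real) list \<Rightarrow> ('v set \<Rightarrow> ereal) list" where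
  "HF F cs = map (\<lambda>p S. max (Opt F (fst p) S) (ereal (F S) / ereal (snd p))) cs"

lemma leaves_labels: "leaves t \<subseteq> set (labels t)"
proof (induction t rule: edges.induct)
  case (1 v cs)
  show ?case
  proof (cases "cs = []")
    case False
    have "leaves (Nd v cs) = (\<Union>p\<in>set cs. leaves (fst p))" using False by simp
    also have "\<dots> \<subseteq> (\<Union>p\<in>set cs. set (labels (fst p)))" using 1 by blast
    also have "\<dots> \<subseteq> set (labels (Nd v cs))" by auto
    finally show ?thesis .
  qed simp
qed

lemma labels_edges: "e \<in> set (edges t) \<Longrightarrow> set (labels (fst e)) \<subseteq> set (labels t)"
proof (induction t arbitrary: e rule: edges.induct)
  case (1 v cs)
  have sub: "\<And>p. p \<in> set cs \<Longrightarrow> set (labels (fst p)) \<subseteq> set (labels (Nd v cs))" by auto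
  from 1(2) have "e \<in> set cs \<or> (\<exists>p\<in>set cs. e \<in> set (edges (fst p)))" by simp
  then show ?case
  proof
    assume "e \<in> set cs" then show ?thesis by (rule sub)
  next
    assume "\<exists>p\<in>set cs. e \<in> set (edges (fst p))"
    then obtain p where p: "p \<in> set cs" "e \<in> set (edges (fst p))" by blast
    show ?thesis using 1(1)[OF p] sub[OF p(1)] by blast
  qed
qed
lemma cost_nonneg: "0 \<le> cost F es S \<pi>"
  unfolding cost_def by (simp add: Sup_upper)

lemma Opt_nonneg: "0 \<le> Opt F c S"
  unfolding Opt_def by (simp add: cost_nonneg le_INF_iff)

lemma cost_cong: "(\<And>s. s \<in> S \<Longrightarrow> \<pi> s = \<pi>' s) \<Longrightarrow> cost F es S \<pi> = cost F es S \<pi>'"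
proof -
  assume "\<And>s. s \<in> S \<Longrightarrow> \<pi> s = \<pi>' s"
  then have "\<And>L. {s\<in>S. \<pi> s \<in> L} = {s\<in>S. \<pi>' s \<in> L}" by auto
  then show ?thesis unfolding cost_def by simp
qed

lemma cost_Nil: "cost F [] S \<pi> = 0"
  unfolding cost_def by simp

lemma cost_decomp:
  assumes dist: "distinct (lbF ((c,x)#cs))"
    and im: "\<pi> ` S \<subseteq> lvF ((c,x)#cs)"
    and S1: "S1 = {s\<in>S. \<pi> s \<in> leaves c}"
  shows "cost F (fe ((c,x)#cs)) S \<pi> =
    max (max (cost F (edges c) S1 \<pi>) (ereal (F S1) / ereal x)) (cost F (fe cs) (S - S1) \<pi>)"
proof -
  have disj: "set (labels c) \<inter> set (lbF cs) = {}" using dist by (simp add: lbF_def)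
  have lvc: "leaves c \<subseteq> set (labels c)" by (rule leaves_labels)
  have lvcs: "lvF cs \<subseteq> set (lbF cs)" unfolding lvF_def lbF_def
  proof (intro UN_least)
    fix p assume "p \<in> set cs"
    then have "set (labels (fst p)) \<subseteq> set (concat (map (\<lambda>p. labels (fst p)) cs))" by auto
    then show "leaves (fst p) \<subseteq> set (concat (map (\<lambda>p. labels (fst p)) cs))"
      using leaves_labels[of "fst p"] by blast
  qed
  have fecs: "\<And>e. e \<in> set (fe cs) \<Longrightarrow> set (labels (fst e)) \<subseteq> set (lbF cs)"
  proof -
    fix e assume "e \<in> set (fe cs)"
    then have "e \<in> set cs \<or> (\<exists>p\<in>set cs. e \<in> set (edges (fst p)))" by (simp add: fe_def)
    then obtain p where p: "p \<in> set cs" "e = p \<or> e \<in> set (edges (fst p))" by blast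
    have "set (labels (fst p)) \<subseteq> set (lbF cs)" using p(1) by (auto simp: lbF_def)
    then show "set (labels (fst e)) \<subseteq> set (lbF cs)" using p(2) labels_edges[of e "fst p"] by blast
  qed
  have pi: "\<And>s. s \<in> S \<Longrightarrow> \<pi> s \<in> leaves c \<or> \<pi> s \<in> lvF cs" using im by (auto simp: lvF_def)
  let ?g = "\<lambda>T e. ereal (F {s\<in>T. \<pi> s \<in> set (labels (fst e))}) / ereal (snd e)"
  have A: "\<And>e. e \<in> set (edges c) \<Longrightarrow> ?g S e = ?g S1 e"
  proof -
    fix e assume e: "e \<in> set (edges c)"
    have "{s\<in>S. \<pi> s \<in> set (labels (fst e))} = {s\<in>S1. \<pi> s \<in> set (labels (fst e))}"
      using labels_edges[OF e] pi disj lvcs S1 by blast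
    then show "?g S e = ?g S1 e" by simp
  qed
  have B: "\<And>e. e \<in> set (fe cs) \<Longrightarrow> ?g S e = ?g (S - S1) e"
  proof -
    fix e assume e: "e \<in> set (fe cs)"
    have "{s\<in>S. \<pi> s \<in> set (labels (fst e))} = {s\<in>S - S1. \<pi> s \<in> set (labels (fst e))}"
      using fecs[OF e] disj lvc S1 by blast
    then show "?g S e = ?g (S - S1) e" by simp
  qed
  have C: "{s\<in>S. \<pi> s \<in> set (labels c)} = S1"
    using pi disj lvcs lvc S1 by blast
  have setfe: "set (fe ((c,x)#cs)) = insert (c,x) (set (edges c) \<union> set (fe cs))"
    unfolding fe_def by auto
  have "cost F (fe ((c,x)#cs)) S \<pi> = Sup (insert 0 (insert (?g S (c,x)) (?g S ` set (edges c) \<union> ?g S ` set (fe cs))))"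
    by (simp only: cost_def setfe image_insert image_Un)
  also have "\<dots> = Sup (insert 0 (insert (ereal (F S1) / ereal x) (?g S1 ` set (edges c) \<union> ?g (S - S1) ` set (fe cs))))"
  proof -
    have e1: "?g S ` set (edges c) = ?g S1 ` set (edges c)" using A by (rule image_cong[OF refl])
    have e2: "?g S ` set (fe cs) = ?g (S - S1) ` set (fe cs)" using B by (rule image_cong[OF refl])
    show ?thesis by (simp only: e1 e2 fst_conv snd_conv C)
  qed
  also have "\<dots> = max (max (cost F (edges c) S1 \<pi>) (ereal (F S1) / ereal x)) (cost F (fe cs) (S - S1) \<pi>)"
  proof -
    have "\<And>(z::ereal) X Y. Sup (insert 0 (insert z (X \<union> Y))) = sup (sup (sup 0 (Sup X)) z) (sup 0 (Sup Y))"
      by (simp add: Sup_union_distrib ac_simps sup.left_idem)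
    then show ?thesis unfolding cost_def by (simp only: sup_max Sup_insert)
  qed
  finally show ?thesis .
qed



lemma lvF_lbF: "lvF cs \<subseteq> set (lbF cs)" unfolding lvF_def lbF_def
proof (intro UN_least)
  fix p assume "p \<in> set cs"
  then have "set (labels (fst p)) \<subseteq> set (concat (map (\<lambda>p. labels (fst p)) cs))" by auto
  then show "leaves (fst p) \<subseteq> set (concat (map (\<lambda>p. labels (fst p)) cs))"
    using leaves_labels[of "fst p"] by blast
qed

lemma le_max_INF:
  fixes r z :: ereal
  assumes "\<And>a b. a \<in> A \<Longrightarrow> b \<in> B \<Longrightarrow> r \<le> max (max (f a) z) (g b)"
  shows "r \<le> max (max (INF a\<in>A. f a) z) (INF b\<in>B. g b)"
proof (rule ccontr)
  assume "\<not> ?thesis"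
  then have lt: "max (max (INF a\<in>A. f a) z) (INF b\<in>B. g b) < r" by (simp add: not_le)
  then have "(INF a\<in>A. f a) < r" "z < r" "(INF b\<in>B. g b) < r" by (metis max_less_iff_conj)+
  then obtain a b where "a \<in> A" "f a < r" "b \<in> B" "g b < r" by (auto simp: INF_less_iff)
  then have "max (max (f a) z) (g b) < r" using \<open>z < r\<close> by simp
  then show False using assms[OF \<open>a \<in> A\<close> \<open>b \<in> B\<close>] by (simp add: not_le[symmetric])
qed

lemma forest:
  assumes "distinct (lbF cs)"
  shows "conv (HF F cs) S = (INF \<pi>\<in>{\<pi>. inj_on \<pi> S \<and> \<pi> ` S \<subseteq> lvF cs}. cost F (fe cs) S \<pi>)"
  using assms
proof (induction cs arbitrary: S)
  case Nil
  show ?case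
  proof (cases "S = {}")
    case True
    then have "{\<pi>. inj_on \<pi> S \<and> \<pi> ` S \<subseteq> lvF []} = UNIV" by auto
    then show ?thesis using True by (simp add: HF_def fe_def cost_Nil)
  next
    case False
    then have E: "{\<pi>. inj_on \<pi> S \<and> \<pi> ` S \<subseteq> lvF []} = {}" by (auto simp: lvF_def)
    show ?thesis unfolding E image_empty Inf_empty using False by (simp add: HF_def top_ereal_def)
  qed
next
  case (Cons p cs)
  obtain c x where p: "p = (c, x)" by (cases p)
  have dist: "distinct (lbF ((c,x)#cs))" using Cons.prems p by simp
  then have distcs: "distinct (lbF cs)" and disj: "set (labels c) \<inter> set (lbF cs) = {}"
    by (auto simp: lbF_def)
  have ldisj: "leaves c \<inter> lvF cs = {}" using disj leaves_labels[of c] lvF_lbF[of cs] by blast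
  have lvcons: "lvF ((c,x)#cs) = leaves c \<union> lvF cs" by (simp add: lvF_def)
  define h where "h = (\<lambda>S. max (Opt F c S) (ereal (F S) / ereal x))"
  have HFc: "HF F ((c,x)#cs) = h # HF F cs" unfolding HF_def h_def by (simp only: list.map fst_conv snd_conv)
  note IH = Cons.IH[OF distcs]
  let ?P = "{\<pi>. inj_on \<pi> S \<and> \<pi> ` S \<subseteq> lvF ((c,x)#cs)}"
  have "conv (HF F ((c,x)#cs)) S = (INF \<pi>\<in>?P. cost F (fe ((c,x)#cs)) S \<pi>)"
  proof (rule antisym)
    show "conv (HF F ((c,x)#cs)) S \<le> (INF \<pi>\<in>?P. cost F (fe ((c,x)#cs)) S \<pi>)"
    proof (rule INF_greatest)
      fix \<pi> assume "\<pi> \<in> ?P"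
      then have inj: "inj_on \<pi> S" and im: "\<pi> ` S \<subseteq> leaves c \<union> lvF cs" using lvcons by auto
      define S1 where "S1 = {s\<in>S. \<pi> s \<in> leaves c}"
      have S1S: "S1 \<in> Pow S" by (auto simp: S1_def)
      have p1: "\<pi> \<in> {\<pi>. inj_on \<pi> S1 \<and> \<pi> ` S1 \<subseteq> leaves c}"
        using inj by (auto simp: S1_def intro: inj_on_subset)
      have p2: "\<pi> \<in> {\<pi>. inj_on \<pi> (S - S1) \<and> \<pi> ` (S - S1) \<subseteq> lvF cs}"
        using inj im by (auto simp: S1_def intro: inj_on_subset)
      have "conv (HF F ((c,x)#cs)) S \<le> max (h S1) (conv (HF F cs) (S - S1))"
        unfolding HFc conv.simps by (rule INF_lower[OF S1S])
      also have "\<dots> \<le> max (max (cost F (edges c) S1 \<pi>) (ereal (F S1) / ereal x)) (cost F (fe cs) (S - S1) \<pi>)"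
      proof (rule max.mono)
        show "h S1 \<le> max (cost F (edges c) S1 \<pi>) (ereal (F S1) / ereal x)"
          unfolding h_def Opt_def by (rule max.mono[OF INF_lower[OF p1] order_refl])
        show "conv (HF F cs) (S - S1) \<le> cost F (fe cs) (S - S1) \<pi>"
          unfolding IH by (rule INF_lower[OF p2])
      qed
      also have "\<dots> = cost F (fe ((c,x)#cs)) S \<pi>"
        using cost_decomp[OF dist _ S1_def] \<open>\<pi> \<in> ?P\<close> by simp
      finally show "conv (HF F ((c,x)#cs)) S \<le> cost F (fe ((c,x)#cs)) S \<pi>" .
    qed
    show "(INF \<pi>\<in>?P. cost F (fe ((c,x)#cs)) S \<pi>) \<le> conv (HF F ((c,x)#cs)) S"
      unfolding HFc conv.simps
    proof (rule INF_greatest)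
      fix S1 assume S1S: "S1 \<in> Pow S"
      show "(INF \<pi>\<in>?P. cost F (fe ((c,x)#cs)) S \<pi>) \<le> max (h S1) (conv (HF F cs) (S - S1))"
        unfolding h_def Opt_def IH
      proof (rule le_max_INF)
        fix \<pi>1 \<pi>2
        assume p1: "\<pi>1 \<in> {\<pi>. inj_on \<pi> S1 \<and> \<pi> ` S1 \<subseteq> leaves c}"
          and p2: "\<pi>2 \<in> {\<pi>. inj_on \<pi> (S - S1) \<and> \<pi> ` (S - S1) \<subseteq> lvF cs}"
        define \<pi> where "\<pi> = (\<lambda>s. if s \<in> S1 then \<pi>1 s else \<pi>2 s)"
        have inj: "inj_on \<pi> S"
        proof (rule inj_onI)
          fix s t assume st: "s \<in> S" "t \<in> S" "\<pi> s = \<pi> t"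
          show "s = t"
          proof (cases "s \<in> S1"; cases "t \<in> S1")
            assume "s \<in> S1" "t \<in> S1" then show ?thesis using st p1 by (auto simp: \<pi>_def inj_on_def)
          next
            assume "s \<notin> S1" "t \<notin> S1" then show ?thesis using st p2 by (auto simp: \<pi>_def inj_on_def)
          next
            assume "s \<in> S1" "t \<notin> S1"
            then have "\<pi> s \<in> leaves c" "\<pi> t \<in> lvF cs" using st p1 p2 by (auto simp: \<pi>_def)
            then show ?thesis using st ldisj by auto
          next
            assume "s \<notin> S1" "t \<in> S1"
            then have "\<pi> t \<in> leaves c" "\<pi> s \<in> lvF cs" using st p1 p2 by (auto simp: \<pi>_def)
            then show ?thesis using st ldisj by auto
          qed
        qed
        have im: "\<pi> ` S \<subseteq> lvF ((c,x)#cs)" using p1 p2 lvcons by (auto simp: \<pi>_def)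
        have S1eq: "S1 = {s\<in>S. \<pi> s \<in> leaves c}"
          using S1S p1 p2 ldisj by (auto simp: \<pi>_def)
        have "(INF \<pi>\<in>?P. cost F (fe ((c,x)#cs)) S \<pi>) \<le> cost F (fe ((c,x)#cs)) S \<pi>"
          by (rule INF_lower) (use inj im in simp)
        also have "\<dots> = max (max (cost F (edges c) S1 \<pi>) (ereal (F S1) / ereal x)) (cost F (fe cs) (S - S1) \<pi>)"
          by (rule cost_decomp[OF dist im S1eq])
        also have "cost F (edges c) S1 \<pi> = cost F (edges c) S1 \<pi>1"
          by (rule cost_cong) (simp add: \<pi>_def)
        also have "cost F (fe cs) (S - S1) \<pi> = cost F (fe cs) (S - S1) \<pi>2"
          by (rule cost_cong) (simp add: \<pi>_def)
        finally show "(INF \<pi>\<in>?P. cost F (fe ((c,x)#cs)) S \<pi>)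
          \<le> max (max (cost F (edges c) S1 \<pi>1) (ereal (F S1) / ereal x)) (cost F (fe cs) (S - S1) \<pi>2)" .
      qed
    qed
  qed
  then show ?case using p by simp
qed

lemma Opt_Nd:
  assumes "distinct (labels (Nd v cs))" "cs \<noteq> []"
  shows "Opt F (Nd v cs) S = conv (HF F cs) S"
proof -
  have "distinct (lbF cs)" using assms(1) by (simp add: lbF_def)
  moreover have "leaves (Nd v cs) = lvF cs" using assms(2) by (simp add: lvF_def)
  moreover have "edges (Nd v cs) = fe cs" by (simp add: fe_def)
  ultimately show ?thesis unfolding Opt_def by (simp add: forest)
qed

lemma Opt_leaf:
  assumes "finite S"
  shows "Opt F (Nd v []) S = (if card S \<le> 1 then 0 else \<infinity>)"
proof (cases "card S \<le> 1")
  case True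
  have "(\<lambda>_. v) \<in> {\<pi>. inj_on \<pi> S \<and> \<pi> ` S \<subseteq> leaves (Nd v [])}"
  proof -
    have "inj_on (\<lambda>_. v) S"
    proof (rule inj_onI)
      fix s t assume "s \<in> S" "t \<in> S"
      then show "s = t" using True assms by (metis card_le_Suc0_iff_eq One_nat_def)
    qed
    then show ?thesis by auto
  qed
  then have "{\<pi>. inj_on \<pi> S \<and> \<pi> ` S \<subseteq> leaves (Nd v [])} \<noteq> {}" by blast
  then show ?thesis using True unfolding Opt_def by (simp add: cost_Nil)
next
  case False
  have "{\<pi>. inj_on \<pi> S \<and> \<pi> ` S \<subseteq> leaves (Nd v [])} = {}"
  proof (rule ccontr)
    assume "{\<pi>. inj_on \<pi> S \<and> \<pi> ` S \<subseteq> leaves (Nd v [])} \<noteq> {}"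
    then obtain \<pi> where "inj_on \<pi> S" "\<pi> ` S \<subseteq> {v}" by auto
    then have "card S \<le> card {v}" by (meson card_inj_on_le finite.emptyI finite.insertI)
    then show False using False by simp
  qed
  then show ?thesis using False unfolding Opt_def by (simp only: image_empty Inf_empty) (simp add: top_ereal_def)
qed



lemma dp_nonneg: "0 \<le> dp_cong F t S"
proof (induction t arbitrary: S)
  case (BBin l cl r cr)
  show ?case
    by (simp only: dp_cong.simps, rule INF_greatest)
       (metis BBin.IH(1) max.coboundedI1)
qed (auto simp: le_max_iff_disj)

lemma zinf: "ereal r / \<infinity> = 0" by simp

definition H :: "('a set \<Rightarrow> real) \<Rightarrow> ('a btree \<times> ereal) \<Rightarrow> 'a set \<Rightarrow> ereal" where
  "H F q S = max (dp_cong F (fst q) S) (ereal (F S) / snd q)"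

lemma H_nonneg: "0 \<le> H F q S"
  unfolding H_def by (metis dp_nonneg max.coboundedI1)

lemma combs_dp:
  assumes "combs M p"
  shows "mset xs = M \<Longrightarrow> H F p S = conv (map (H F) xs) S"
  using assms
proof (induction arbitrary: xs S rule: combs.induct)
  case (single x)
  then have "xs = [x]" by (simp add: mset_single_iff)
  then show ?case using conv_single[of "H F x", OF H_nonneg] by simp
next
  case (bin A ta ca B tb cb)
  obtain as where as: "mset as = A" using ex_mset by blast
  obtain bs where bs: "mset bs = B" using ex_mset by blast
  have "mset (map (H F) xs) = mset (map (H F) (as @ bs))" using bin.prems as bs by simp
  then have "conv (map (H F) xs) = conv (map (H F) (as @ bs))" by (rule conv_perm)
  then have "conv (map (H F) xs) S = (INF S1\<in>Pow S. max (conv (map (H F) as) S1) (conv (map (H F) bs) (S - S1)))"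
    by (simp add: conv_append)
  also have "\<dots> = (INF S1\<in>Pow S. max (H F (ta, ca) S1) (H F (tb, cb) (S - S1)))"
    using bin.IH(1)[OF as] bin.IH(2)[OF bs] by simp
  also have "\<dots> = dp_cong F (BBin ta ca tb cb) S"
    unfolding dp_cong.simps H_def fst_conv snd_conv
    by (rule INF_cong[OF refl]) (simp only: max.assoc max.commute max.left_commute)
  also have "\<dots> = H F (BBin ta ca tb cb, \<infinity>) S"
    unfolding H_def fst_conv snd_conv zinf by (rule max_absorb1[OF dp_nonneg, symmetric])
  finally show ?case by simp
next
  case (un A t c)
  have "H F (BUn t c, \<infinity>) S = H F (t, c) S"
    unfolding H_def fst_conv snd_conv zinf dp_cong.simps by (rule max_absorb1) (metis dp_nonneg max.coboundedI1)
  then show ?case using un.IH[OF un.prems] by simp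
qed

lemma distinct_child:
  assumes "distinct (labels (Nd v cs))" "p \<in> set cs"
  shows "distinct (labels (fst p))"
  using assms by (simp add: distinct_concat_iff)

lemma cbt_dp:
  assumes "cbt n t"
  shows "distinct (labels n) \<longrightarrow> (\<forall>S. finite S \<longrightarrow> dp_cong F t S = Opt F n S)"
  using assms
proof (induction rule: cbt.induct)
  case (leaf v)
  then show ?case by (simp add: Opt_leaf)
next
  case (one c t v x)
  show ?case
  proof (intro impI allI)
    fix S :: "'a set" assume d: "distinct (labels (Nd v [(c, x)]))" and fS: "finite S"
    then have dc: "distinct (labels c)" using distinct_child[OF d] by simp
    have HF1: "HF F [(c,x)] = [\<lambda>S. max (Opt F c S) (ereal (F S) / ereal x)]"
      unfolding HF_def by (simp only: list.map fst_conv snd_conv)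
    have "Opt F (Nd v [(c, x)]) S = conv (HF F [(c,x)]) S" using Opt_Nd[OF d] by simp
    also have "\<dots> = max (Opt F c S) (ereal (F S) / ereal x)"
      unfolding HF1 by (rule conv_single) (metis Opt_nonneg max.coboundedI1)
    also have "\<dots> = dp_cong F (BUn t (ereal x)) S" using one.IH dc fS by simp
    finally show "dp_cong F (BUn t (ereal x)) S = Opt F (Nd v [(c, x)]) S" by simp
  qed
next
  case (two c1 t1 c2 t2 v x1 x2)
  show ?case
  proof (intro impI allI)
    fix S :: "'a set" assume d: "distinct (labels (Nd v [(c1, x1), (c2, x2)]))" and fS: "finite S"
    then have dc: "distinct (labels c1)" "distinct (labels c2)" using distinct_child[OF d] by simp_all
    define h1 where "h1 = (\<lambda>S. max (Opt F c1 S) (ereal (F S) / ereal x1))"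
    define h2 where "h2 = (\<lambda>S. max (Opt F c2 S) (ereal (F S) / ereal x2))"
    have HF2: "HF F [(c1,x1),(c2,x2)] = [h1, h2]"
      unfolding HF_def h1_def h2_def by (simp only: list.map fst_conv snd_conv)
    have ne: "[(c1, x1), (c2, x2)] \<noteq> []" by simp
    have "Opt F (Nd v [(c1, x1), (c2, x2)]) S = conv [h1, h2] S" unfolding Opt_Nd[OF d ne] HF2 ..
    also have "\<dots> = (INF S1\<in>Pow S. max (h1 S1) (h2 (S - S1)))"
      unfolding conv.simps(2)[of h1] 
      by (rule INF_cong[OF refl], subst conv_single) (auto simp: h2_def intro: max.coboundedI1 Opt_nonneg)
    also have "\<dots> = dp_cong F (BBin t1 (ereal x1) t2 (ereal x2)) S"
      unfolding dp_cong.simps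
    proof (rule INF_cong[OF refl])
      fix S1 assume "S1 \<in> Pow S"
      then have "finite S1" "finite (S - S1)" using fS finite_subset by auto
      then show "max (h1 S1) (h2 (S - S1)) = max (max (dp_cong F t1 S1) (dp_cong F t2 (S - S1)))
          (max (ereal (F S1) / ereal x1) (ereal (F (S - S1)) / ereal x2))"
        using two.IH dc unfolding h1_def h2_def
        by (simp only: max.assoc max.commute max.left_commute)
    qed
    finally show "dp_cong F (BBin t1 (ereal x1) t2 (ereal x2)) S = Opt F (Nd v [(c1, x1), (c2, x2)]) S" by simp
  qed
next
  case (many cs ts T v)
  show ?case
  proof (intro impI allI)
    fix S :: "'a set" assume d: "distinct (labels (Nd v cs))" and fS: "finite S"
    have ne: "cs \<noteq> []" using many.hyps(1) by auto
    have "dp_cong F T S = H F (T, \<infinity>) S"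
      unfolding H_def fst_conv snd_conv zinf by (rule max_absorb1[OF dp_nonneg, symmetric])
    also have "\<dots> = conv (map (H F) ts) S" by (rule combs_dp[OF many.hyps(3) refl])
    also have "\<dots> = conv (HF F cs) S"
    proof (rule conv_cong[OF _ fS])
      show "list_all2 (\<lambda>f g. \<forall>T. finite T \<longrightarrow> f T = g T) (map (H F) ts) (HF F cs)"
        unfolding list_all2_conv_all_nth
      proof (intro conjI allI impI)
        show "length (map (H F) ts) = length (HF F cs)" using many.hyps(2) by (simp add: HF_def)
        fix i :: nat and U :: "'a set" assume i: "i < length (map (H F) ts)" and fU: "finite U"
        then have i': "i < length cs" using many.hyps(2) by simp
        have dci: "distinct (labels (fst (cs ! i)))" using distinct_child[OF d] i' by simp
        have "dp_cong F (fst (ts ! i)) U = Opt F (fst (cs ! i)) U" and "snd (ts ! i) = ereal (snd (cs ! i))"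
          using many.IH i' dci fU by auto
        then show "(map (H F) ts ! i) U = (HF F cs ! i) U"
          using i i' by (simp add: H_def HF_def)
      qed
    qed
    also have "\<dots> = Opt F (Nd v cs) S" by (rule Opt_Nd[OF d ne, symmetric])
    finally show "dp_cong F T S = Opt F (Nd v cs) S" .
  qed
qed



lemma fe_labels: "e \<in> set (fe cs) \<Longrightarrow> set (labels (fst e)) \<subseteq> set (lbF cs)"
proof -
  assume "e \<in> set (fe cs)"
  then have "e \<in> set cs \<or> (\<exists>p\<in>set cs. e \<in> set (edges (fst p)))" by (simp add: fe_def)
  then obtain p where p: "p \<in> set cs" "e = p \<or> e \<in> set (edges (fst p))" by blast
  have "set (labels (fst p)) \<subseteq> set (lbF cs)" using p(1) by (auto simp: lbF_def)
  then show "set (labels (fst e)) \<subseteq> set (lbF cs)" using p(2) labels_edges[of e "fst p"] by blast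
qed

lemma edge_load_Flow:
  assumes "\<pi> g = g" "g \<notin> set (labels c)" "RI \<subseteq> V" "RII \<subseteq> V \<times> V"
  shows "edge_load RI RII fI fII g \<pi> c = Flow RI RII fI fII {s\<in>V. \<pi> s \<in> set (labels c)}"
  unfolding edge_load_def Flow_def on_path_def
proof (intro arg_cong2[where f="(+)"] sum.cong refl)
  fix v assume "v \<in> RI"
  then show "(if (\<pi> v \<in> set (labels c)) \<noteq> (\<pi> g \<in> set (labels c)) then fI v else 0) =
    (if v \<in> {s \<in> V. \<pi> s \<in> set (labels c)} then fI v else 0)" using assms by auto
next
  fix e assume "e \<in> RII"
  then have "fst e \<in> V" "snd e \<in> V" using assms by auto
  then show "(if (\<pi> (fst e) \<in> set (labels c)) \<noteq> (\<pi> (snd e) \<in> set (labels c)) then fII e else 0) =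
    (if (fst e \<in> {s \<in> V. \<pi> s \<in> set (labels c)}) \<noteq> (snd e \<in> {s \<in> V. \<pi> s \<in> set (labels c)}) then fII e else 0)"
    by simp
qed

lemma Flow_nonneg:
  assumes "\<forall>v\<in>RI. fI v \<ge> 0" "\<forall>e\<in>RII. fII e \<ge> 0"
  shows "0 \<le> Flow RI RII fI fII S"
  unfolding Flow_def using assms by (intro add_nonneg_nonneg sum_nonneg) auto

lemma Sup_ereal_Max:
  fixes A :: "real set"
  assumes "finite A" "A \<noteq> {}" "\<forall>a\<in>A. 0 \<le> a"
  shows "Sup (insert 0 (ereal ` A)) = ereal (Max A)"
proof (rule antisym)
  have "Max A \<in> A" using assms Max_in by blast
  then have "0 \<le> Max A" using assms by blast
  then show "Sup (insert 0 (ereal ` A)) \<le> ereal (Max A)"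
    using assms by (auto intro!: Sup_least)
  show "ereal (Max A) \<le> Sup (insert 0 (ereal ` A))"
    by (rule Sup_upper) (use \<open>Max A \<in> A\<close> in blast)
qed

theorem lemma3:
  fixes N :: "'a ntree" and T :: "'a btree" and g :: 'a and V :: "'a set"
    and RI :: "'a set" and RII :: "('a \<times> 'a) set"
    and fI :: "'a \<Rightarrow> real" and fII :: "'a \<times> 'a \<Rightarrow> real"
  assumes "host_tree_ok N"
    and "root N = g"
    and "children N \<noteq> []"
    and "finite V" and "g \<notin> V"
    and "RI \<subseteq> V" and "RII \<subseteq> V \<times> V"
    and "\<forall>v\<in>RI. fI v \<ge> 0" and "\<forall>e\<in>RII. fII e \<ge> 0"
    and "cbt N T"
  shows "dp_cong (Flow RI RII fI fII) T V
           = (INF \<pi>\<in>{\<pi>. is_embedding N g V \<pi>}. ereal (congestion N RI RII fI fII g \<pi>))"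
proof -
  define Fl where "Fl = Flow RI RII fI fII"
  obtain cs where N: "N = Nd g cs" using assms(2) by (cases N) auto
  have ne: "cs \<noteq> []" using assms(3) N by simp
  have dist: "distinct (labels N)" and pos: "\<forall>e\<in>set (edges N). snd e > 0"
    using assms(1) by (auto simp: host_tree_ok_def)
  have gnot: "g \<notin> set (lbF cs)" using dist N by (simp add: lbF_def)
  have edgesN: "edges N = fe cs" using N by (simp add: fe_def)
  have leavesN: "leaves N = lvF cs" using N ne by (simp add: lvF_def)
  have "leaves N \<subseteq> set (lbF cs)" unfolding leavesN by (rule lvF_lbF)
  then have gleaf: "g \<notin> leaves N" using gnot by blast
  have gedge: "\<And>e. e \<in> set (edges N) \<Longrightarrow> g \<notin> set (labels (fst e))"
  proof -
    fix e assume "e \<in> set (edges N)"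
    then have "set (labels (fst e)) \<subseteq> set (lbF cs)" unfolding edgesN by (rule fe_labels)
    then show "g \<notin> set (labels (fst e))" using gnot by blast
  qed
  have Flnn: "\<And>S. 0 \<le> Fl S" unfolding Fl_def using Flow_nonneg assms(8,9) by blast
  have dp: "dp_cong Fl T V = Opt Fl N V" using cbt_dp[OF assms(10)] dist assms(4) by blast
  have costc: "cost Fl (edges N) V \<pi> = ereal (congestion N RI RII fI fII g \<pi>)"
    if emb: "is_embedding N g V \<pi>" for \<pi>
  proof -
    have pg: "\<pi> g = g" using emb by (simp add: is_embedding_def)
    let ?f = "\<lambda>e. edge_load RI RII fI fII g \<pi> (fst e) / snd e"
    have img: "(\<lambda>e. ereal (Fl {s\<in>V. \<pi> s \<in> set (labels (fst e))}) / ereal (snd e)) ` set (edges N)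
        = ereal ` (?f ` set (edges N))"
      unfolding image_image
    proof (rule image_cong[OF refl])
      fix e assume e: "e \<in> set (edges N)"
      have "edge_load RI RII fI fII g \<pi> (fst e) = Fl {s\<in>V. \<pi> s \<in> set (labels (fst e))}"
        unfolding Fl_def by (rule edge_load_Flow[where \<pi>=\<pi> and g=g and V=V, OF pg gedge[OF e] assms(6,7)])
      moreover have "snd e \<noteq> 0" using pos e by auto
      ultimately show "ereal (Fl {s\<in>V. \<pi> s \<in> set (labels (fst e))}) / ereal (snd e) = ereal (?f e)"
        by simp
    qed
    have nn: "\<forall>a\<in>?f ` set (edges N). 0 \<le> a"
    proof
      fix a assume "a \<in> ?f ` set (edges N)"
      then obtain e where e: "e \<in> set (edges N)" "a = ?f e" by blast
      have "edge_load RI RII fI fII g \<pi> (fst e) = Fl {s\<in>V. \<pi> s \<in> set (labels (fst e))}"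
        unfolding Fl_def by (rule edge_load_Flow[where \<pi>=\<pi> and g=g and V=V, OF pg gedge[OF e(1)] assms(6,7)])
      then show "0 \<le> a" using e pos Flnn by (simp add: less_imp_le)
    qed
    have nonempty: "set (edges N) \<noteq> {}" using N ne by simp
    show ?thesis unfolding cost_def img congestion_def
      by (rule Sup_ereal_Max) (use nn nonempty in auto)
  qed
  have "Opt Fl N V = (INF \<pi>\<in>{\<pi>. is_embedding N g V \<pi>}. ereal (congestion N RI RII fI fII g \<pi>))"
  proof (rule antisym)
    show "Opt Fl N V \<le> (INF \<pi>\<in>{\<pi>. is_embedding N g V \<pi>}. ereal (congestion N RI RII fI fII g \<pi>))"
    proof (rule INF_greatest)
      fix \<pi> assume "\<pi> \<in> {\<pi>. is_embedding N g V \<pi>}"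
      then have emb: "is_embedding N g V \<pi>" by simp
      then have "\<pi> \<in> {\<pi>. inj_on \<pi> V \<and> \<pi> ` V \<subseteq> leaves N}"
        by (auto simp: is_embedding_def intro: inj_on_subset)
      then have "Opt Fl N V \<le> cost Fl (edges N) V \<pi>" unfolding Opt_def by (rule INF_lower)
      then show "Opt Fl N V \<le> ereal (congestion N RI RII fI fII g \<pi>)" using costc[OF emb] by simp
    qed
    show "(INF \<pi>\<in>{\<pi>. is_embedding N g V \<pi>}. ereal (congestion N RI RII fI fII g \<pi>)) \<le> Opt Fl N V"
      unfolding Opt_def
    proof (rule INF_greatest)
      fix \<pi> assume "\<pi> \<in> {\<pi>. inj_on \<pi> V \<and> \<pi> ` V \<subseteq> leaves N}"
      then have inj: "inj_on \<pi> V" and im: "\<pi> ` V \<subseteq> leaves N" by auto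
      define \<pi>' where "\<pi>' = \<pi>(g := g)"
      have eq: "\<And>s. s \<in> V \<Longrightarrow> \<pi> s = \<pi>' s" using assms(5) by (auto simp: \<pi>'_def)
      have "inj_on \<pi>' V" using inj eq inj_on_cong by blast
      moreover have "\<pi>' ` V \<subseteq> leaves N" using im eq by auto
      ultimately have emb: "is_embedding N g V \<pi>'"
        using gleaf assms(5) unfolding is_embedding_def by (auto simp: \<pi>'_def)
      have "(INF \<pi>\<in>{\<pi>. is_embedding N g V \<pi>}. ereal (congestion N RI RII fI fII g \<pi>))
          \<le> ereal (congestion N RI RII fI fII g \<pi>')" by (rule INF_lower) (simp add: emb)
      also have "\<dots> = cost Fl (edges N) V \<pi>'" using costc[OF emb] by simp
      also have "\<dots> = cost Fl (edges N) V \<pi>" by (rule cost_cong) (simp add: eq)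
      finally show "(INF \<pi>\<in>{\<pi>. is_embedding N g V \<pi>}. ereal (congestion N RI RII fI fII g \<pi>))
          \<le> cost Fl (edges N) V \<pi>" .
    qed
  qed
  then show ?thesis using dp unfolding Fl_def by simp
qed

end
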